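(* Let $\mathfrak A\subseteq\mathcal B(\mathcal H)$ be a von Neumann algebra and $T\in\mathfrak A$. Let $E\in\mathfrak A$ be a projection such that $ETE-E$ is invertible in $E\mathfrak A E$. Then for every $A\in(I-E)\mathfrak A E$ there exists an idempotent $P\in\mathfrak A$ such that (1) $\mathcal K(P)=I-E$; (2) $\|P\|\le 1+\|TE\|+\|A\|(\|TE\|+1)$; (3) $\operatorname{Ran}((T-P)E)=\{\xi+A\xi:\ \xi\in E\mathcal H\}$.
   Context: For $S\in\mathcal B(\mathcal H)$, $\mathcal K(S)$ denotes the orthogonal projection onto $\ker S$, and $\operatorname{Ran}(S)=\{S\xi:\xi\in\mathcal H\}$. *)

theory Defs
  imports "HOL-Analysis.Analysis"
begin

text \<open>HOL-Analysis only has real inner product spaces, so we introduce complex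
Hilbert spaces as a type class: a (real) Banach space with a compatible complex
scalar multiplication and a complex inner product inducing the norm.\<close>

class chilbert = banach +
  fixes scaleC :: "complex \<Rightarrow> 'a \<Rightarrow> 'a" (infixr \<open>*\<^sub>C\<close> 75)
    and cinner :: "'a \<Rightarrow> 'a \<Rightarrow> complex"
  assumes scaleC_of_real: "complex_of_real r *\<^sub>C x = r *\<^sub>R x"
    and scaleC_add_right: "a *\<^sub>C (x + y) = a *\<^sub>C x + a *\<^sub>C y"
    and scaleC_add_left: "(a + b) *\<^sub>C x = a *\<^sub>C x + b *\<^sub>C x"
    and scaleC_scaleC: "a *\<^sub>C (b *\<^sub>C x) = (a * b) *\<^sub>C x"
    and scaleC_one: "1 *\<^sub>C x = x"
    and cinner_add_right: "cinner x (y + z) = cinner x y + cinner x z"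
    and cinner_scaleC_right: "cinner x (a *\<^sub>C y) = a * cinner x y"
    and cinner_commute: "cinner x y = cnj (cinner y x)"
    and cinner_pos: "0 \<le> Re (cinner x x)"
    and cinner_eq_zero: "cinner x x = 0 \<longleftrightarrow> x = 0"
    and norm_cinner: "norm x = sqrt (Re (cinner x x))"

definition clinear_op :: "('a::chilbert \<Rightarrow> 'a) \<Rightarrow> bool" where
  "clinear_op f \<longleftrightarrow> (\<forall>x y. f (x + y) = f x + f y) \<and> (\<forall>c x. f (c *\<^sub>C x) = c *\<^sub>C f x)"

definition bop :: "('a::chilbert \<Rightarrow> 'a) set" where
  "bop = {f. clinear_op f \<and> (\<exists>K. \<forall>x. norm (f x) \<le> norm x * K)}"

definition adj :: "('a::chilbert \<Rightarrow> 'a) \<Rightarrow> ('a \<Rightarrow> 'a)" where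
  "adj T = (THE S. S \<in> bop \<and> (\<forall>x y. cinner (T x) y = cinner x (S y)))"

definition commutant :: "('a::chilbert \<Rightarrow> 'a) set \<Rightarrow> ('a \<Rightarrow> 'a) set" where
  "commutant M = {S \<in> bop. \<forall>T\<in>M. S \<circ> T = T \<circ> S}"

definition von_neumann_algebra :: "('a::chilbert \<Rightarrow> 'a) set \<Rightarrow> bool" where
  "von_neumann_algebra M \<longleftrightarrow>
     M \<subseteq> bop \<and> id \<in> M \<and>
     (\<forall>S\<in>M. \<forall>T\<in>M. (\<lambda>x. S x + T x) \<in> M \<and> S \<circ> T \<in> M) \<and>
     (\<forall>c. \<forall>T\<in>M. (\<lambda>x. c *\<^sub>C T x) \<in> M) \<and>
     (\<forall>T\<in>M. adj T \<in> M) \<and>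
     commutant (commutant M) = M"

definition is_projection :: "('a::chilbert \<Rightarrow> 'a) \<Rightarrow> bool" where
  "is_projection E \<longleftrightarrow> E \<in> bop \<and> E \<circ> E = E \<and> adj E = E"

definition is_idempotent :: "('a::chilbert \<Rightarrow> 'a) \<Rightarrow> bool" where
  "is_idempotent P \<longleftrightarrow> P \<in> bop \<and> P \<circ> P = P"

definition kerproj :: "('a::chilbert \<Rightarrow> 'a) \<Rightarrow> ('a \<Rightarrow> 'a)" where
  "kerproj S = (THE Q. is_projection Q \<and> range Q = {x. S x = 0})"

definition corner :: "('a::chilbert \<Rightarrow> 'a) \<Rightarrow> ('a \<Rightarrow> 'a) set \<Rightarrow> ('a \<Rightarrow> 'a) \<Rightarrow> ('a \<Rightarrow> 'a) set" where
  "corner X M Y = {X \<circ> T \<circ> Y | T. T \<in> M}"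

text \<open>Invertibility of \<open>S\<close> in the corner algebra \<open>E \<AA> E\<close> (whose unit is \<open>E\<close>).\<close>
definition invertible_in_corner :: "('a::chilbert \<Rightarrow> 'a) set \<Rightarrow> ('a \<Rightarrow> 'a) \<Rightarrow> ('a \<Rightarrow> 'a) \<Rightarrow> bool" where
  "invertible_in_corner M E S \<longleftrightarrow>
     (\<exists>B\<in>corner E M E. B \<circ> S = E \<and> S \<circ> B = E)"

end

theory Submission
  imports Defs
begin


lemma scaleC_zero_left[simp]: "(0::complex) *\<^sub>C (x::'a::chilbert) = 0"
  using scaleC_of_real[of 0 x] by simp

lemma scaleC_minus1: "(-1::complex) *\<^sub>C (x::'a::chilbert) = - x"
  using scaleC_of_real[of "-1" x] by simp

lemma scaleC_zero_right[simp]: "c *\<^sub>C (0::'a::chilbert) = 0"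
  using scaleC_add_right[of c 0 0] by simp

lemma cinner_zero_right[simp]: "cinner (x::'a::chilbert) 0 = 0"
  using cinner_add_right[of x 0 0] by simp

lemma cinner_zero_left[simp]: "cinner 0 (x::'a::chilbert) = 0"
  using cinner_commute[of 0 x] by simp

lemma cinner_add_left: "cinner ((x::'a::chilbert) + y) z = cinner x z + cinner y z"
  by (metis cinner_add_right cinner_commute complex_cnj_add)

lemma cinner_scaleC_left: "cinner (a *\<^sub>C (x::'a::chilbert)) y = cnj a * cinner x y"
  by (metis cinner_commute cinner_scaleC_right complex_cnj_mult)

lemma cinner_minus_right: "cinner (x::'a::chilbert) (- y) = - cinner x y"
  by (metis cinner_scaleC_right scaleC_minus1 mult_minus1)

lemma cinner_minus_left: "cinner (- (x::'a::chilbert)) y = - cinner x y"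
  by (metis cinner_commute cinner_minus_right complex_cnj_minus)

lemma cinner_diff_right: "cinner (x::'a::chilbert) (y - z) = cinner x y - cinner x z"
  by (metis cinner_add_right cinner_minus_right diff_conv_add_uminus)

lemma cinner_diff_left: "cinner ((x::'a::chilbert) - y) z = cinner x z - cinner y z"
  by (metis cinner_add_left cinner_minus_left diff_conv_add_uminus)

lemma cinner_scaleR_right: "cinner (x::'a::chilbert) (r *\<^sub>R y) = complex_of_real r * cinner x y"
  by (metis cinner_scaleC_right scaleC_of_real)

lemma cinner_scaleR_left: "cinner (r *\<^sub>R (x::'a::chilbert)) y = complex_of_real r * cinner x y"
  by (metis cinner_scaleC_left scaleC_of_real complex_cnj_complex_of_real)

lemma cinner_self: "cinner (x::'a::chilbert) x = complex_of_real ((norm x)^2)"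
proof -
  have "Im (cinner x x) = 0"
    using cinner_commute[of x x] by (metis Im_complex_div_lemma cnj.simps(2) complex_cnj_cancel_iff neg_equal_zero)
  moreover have "Re (cinner x x) = (norm x)^2"
    using norm_cinner[of x] cinner_pos[of x] by simp
  ultimately show ?thesis by (simp add: complex_eq_iff)
qed

lemma cinner_ext: "(\<And>x. cinner x a = cinner x (b::'a::chilbert)) \<Longrightarrow> a = b"
  using cinner_eq_zero[of "a - b"] by (simp add: cinner_diff_left cinner_diff_right)

lemma key_identity:
  fixes x y :: "'a::chilbert"
  assumes "y \<noteq> 0"
  defines "c \<equiv> cinner y x / cinner y y"
  shows "cinner (x - c *\<^sub>C y) (x - c *\<^sub>C y) = cinner x x - cinner y x * cinner x y / cinner y y"
proof -
  have D: "cinner y y \<noteq> 0" using assms cinner_eq_zero by auto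
  have Dr: "cnj (cinner y y) = cinner y y" by (metis cinner_commute)
  have cc: "cnj c = cinner x y / cinner y y" unfolding c_def
    by (simp add: Dr) (metis cinner_commute)
  have "cinner (x - c *\<^sub>C y) (x - c *\<^sub>C y) = cinner x x - c * cinner x y - cnj c * cinner y x + cnj c * c * cinner y y"
    by (simp add: cinner_diff_left cinner_diff_right cinner_scaleC_left cinner_scaleC_right algebra_simps)
  also have "\<dots> = cinner x x - cinner y x * cinner x y / cinner y y"
    unfolding cc unfolding c_def using D by (simp add: field_simps)
  finally show ?thesis .
qed

lemma cauchy_schwarz: "cmod (cinner (x::'a::chilbert) y) \<le> norm x * norm y"
proof (cases "y = 0")
  case True then show ?thesis by simp
next
  case False
  let ?c = "cinner y x / cinner y y"
  have "cinner x y * cinner y x = complex_of_real ((cmod (cinner x y))^2)"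
    by (subst cinner_commute[of y x]) (rule complex_norm_square[symmetric])
  have ny: "norm y > 0" using False by simp
  have h: "cinner x y * cinner y x = complex_of_real ((cmod (cinner x y))^2)"
    by (subst cinner_commute[of y x]) (rule complex_norm_square[symmetric])
  have "complex_of_real ((norm (x - ?c *\<^sub>C y))^2) = cinner (x - ?c *\<^sub>C y) (x - ?c *\<^sub>C y)"
    by (simp only: cinner_self)
  also have "\<dots> = cinner x x - (cinner x y * cinner y x) / cinner y y"
    by (simp add: key_identity[OF False] mult.commute)
  also have "\<dots> = complex_of_real ((norm x)^2) - complex_of_real ((cmod (cinner x y))^2) / complex_of_real ((norm y)^2)"
    by (simp only: cinner_self h)
  also have "\<dots> = complex_of_real ((norm x)^2 - (cmod (cinner x y))^2 / (norm y)^2)"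
    by simp
  finally have "complex_of_real ((norm (x - ?c *\<^sub>C y))^2) = complex_of_real ((norm x)^2 - (cmod (cinner x y))^2 / (norm y)^2)" .
  hence "(norm (x - ?c *\<^sub>C y))^2 = (norm x)^2 - (cmod (cinner x y))^2 / (norm y)^2"
    using of_real_eq_iff by blast
  hence "0 \<le> (norm x)^2 - (cmod (cinner x y))^2 / (norm y)^2"
    by (metis zero_le_power2)
  hence "(cmod (cinner x y))^2 \<le> (norm x)^2 * (norm y)^2"
    using ny by (simp add: field_simps)
  hence "(cmod (cinner x y))^2 \<le> (norm x * norm y)^2" by (simp add: power_mult_distrib)
  thus ?thesis by (meson abs_le_square_iff abs_norm_cancel norm_ge_zero power2_le_imp_le mult_nonneg_nonneg)
qed

lemma norm_add_sq: "(norm ((x::'a::chilbert) + y))^2 = (norm x)^2 + (norm y)^2 + 2 * Re (cinner x y)"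
proof -
  have e: "cinner (x + y) (x + y) = cinner x x + cinner y y + cinner x y + cinner y x"
    by (simp add: cinner_add_left cinner_add_right algebra_simps)
  have "Re (cinner y x) = Re (cinner x y)" by (subst cinner_commute) simp
  moreover have "(norm (x + y))^2 = Re (cinner (x + y) (x + y))" by (simp add: cinner_self)
  ultimately show ?thesis unfolding e by (simp add: cinner_self)
qed

lemma norm_diff_sq: "(norm ((x::'a::chilbert) - y))^2 = (norm x)^2 + (norm y)^2 - 2 * Re (cinner x y)"
  using norm_add_sq[of x "-y"] by (simp add: cinner_minus_right)

lemma parallelogram: "(norm ((x::'a::chilbert) + y))^2 + (norm (x - y))^2 = 2 * (norm x)^2 + 2 * (norm y)^2"
  using norm_add_sq[of x y] norm_diff_sq[of x y] by simp



lemma bop_add: "T \<in> bop \<Longrightarrow> T (x + y) = T x + T y"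
  by (simp add: bop_def clinear_op_def)
lemma bop_scaleC: "T \<in> bop \<Longrightarrow> T (c *\<^sub>C x) = c *\<^sub>C T x"
  by (simp add: bop_def clinear_op_def)
lemma bop_scaleR: "T \<in> bop \<Longrightarrow> T (r *\<^sub>R x) = r *\<^sub>R T (x::'a::chilbert)"
  by (metis bop_scaleC scaleC_of_real)
lemma bop_zero: "T \<in> bop \<Longrightarrow> T (0::'a::chilbert) = 0"
  by (metis bop_scaleR scaleR_zero_left)
lemma bop_minus: "T \<in> bop \<Longrightarrow> T (- x) = - T (x::'a::chilbert)"
  by (metis bop_scaleR scaleR_minus1_left)
lemma bop_diff: "T \<in> bop \<Longrightarrow> T (x - y) = T x - T (y::'a::chilbert)"
  by (metis bop_add bop_minus diff_conv_add_uminus)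
lemma bop_bounded_linear: "T \<in> bop \<Longrightarrow> bounded_linear (T::'a::chilbert \<Rightarrow> 'a)"
  apply (rule bounded_linear_intro[where K = "SOME K. \<forall>x. norm (T x) \<le> norm x * K"])
    apply (simp add: bop_add)
   apply (simp add: bop_scaleR)
  apply (rule someI_ex[where P = "\<lambda>K. \<forall>x. norm (T x) \<le> norm x * K", rule_format])
  apply (simp add: bop_def)
  done

lemma riesz:
  fixes f :: "'a::chilbert \<Rightarrow> complex"
  assumes add: "\<And>x y. f (x + y) = f x + f y"
    and sc: "\<And>c x. f (c *\<^sub>C x) = c * f x"
    and bd: "\<And>x. cmod (f x) \<le> norm x * K"
  shows "\<exists>z. \<forall>x. f x = cinner z x"
proof (cases "\<forall>x. f x = 0")
  case True then show ?thesis by (intro exI[of _ 0]) simp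
next
  case False
  then obtain x0 where fx0: "f x0 \<noteq> 0" by blast
  have fR: "f (r *\<^sub>R x) = complex_of_real r * f x" for r x
    by (metis sc scaleC_of_real)
  have f0: "f 0 = 0" using fR[of 0 0] by simp
  have fminus: "f (- x) = - f x" for x using fR[of "-1" x] by simp
  have fdiff: "f (x - y) = f x - f y" for x y
    by (metis add fminus diff_conv_add_uminus)
  have bl: "bounded_linear f"
    apply (rule bounded_linear_intro[where K = K])
    apply (simp add: add) apply (simp add: fR scaleR_conv_of_real) using bd by simp
  define N where "N = {x. f x = 0}"
  have N_eq: "N = f -` {0}" unfolding N_def by auto
  have clN: "closed N" unfolding N_eq
    by (rule continuous_closed_vimage) (auto intro: bounded_linear.continuous[OF bl] continuous_ident)
  have "0 \<in> N" unfolding N_def using f0 by simp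
  hence Nne: "N \<noteq> {}" by auto
  define d where "d = infdist x0 N"
  have d0: "0 \<le> d" unfolding d_def by (rule infdist_nonneg)
  have dle: "d \<le> dist x0 m" if "m \<in> N" for m unfolding d_def using that by (rule infdist_le)
  have ex: "\<forall>k. \<exists>m. m \<in> N \<and> dist x0 m < d + 1 / real (Suc k)"
  proof
    fix k
    have "(INF a\<in>N. dist x0 a) < d + 1 / real (Suc k)"
      unfolding d_def infdist_notempty[OF Nne] by simp
    thus "\<exists>m. m \<in> N \<and> dist x0 m < d + 1 / real (Suc k)" using Nne by (subst (asm) cINF_less_iff) auto
  qed
  obtain s where s: "\<forall>k. s k \<in> N \<and> dist x0 (s k) < d + 1 / real (Suc k)"
    using choice[OF ex] by blast
  hence sN: "\<And>k. s k \<in> N" and sd: "\<And>k. dist x0 (s k) < d + 1 / real (Suc k)" by auto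
  have mid: "(1/2) *\<^sub>R (a + b) \<in> N" if "a \<in> N" "b \<in> N" for a b
    using that unfolding N_def by (simp add: fR add)
  have bound: "(norm (s j - s k))^2 \<le> 2 * (dist x0 (s j))^2 + 2 * (dist x0 (s k))^2 - 4 * d^2" for j k
  proof -
    let ?u = "x0 - s j" and ?v = "x0 - s k"
    have "?u + ?v = 2 *\<^sub>R (x0 - (1/2) *\<^sub>R (s j + s k))"
      by (simp add: algebra_simps scaleR_2)
    hence "norm (?u + ?v) = 2 * dist x0 ((1/2) *\<^sub>R (s j + s k))"
      by (simp add: dist_norm)
    hence n2: "2 * d \<le> norm (?u + ?v)" using dle[OF mid[OF sN sN]] by simp
    have A: "(2 * d)^2 \<le> (norm (?u + ?v))^2" by (rule power_mono[OF n2]) (use d0 in simp)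
    have "?u - ?v = - (s j - s k)" by simp
    hence B: "norm (?u - ?v) = norm (s j - s k)" by (simp only: norm_minus_cancel)
    have C: "(norm (?u + ?v))^2 + (norm (?u - ?v))^2 = 2 * (dist x0 (s j))^2 + 2 * (dist x0 (s k))^2"
      unfolding dist_norm by (rule parallelogram)
    have D: "(2 * d)^2 = 4 * d^2" by (simp add: power_mult_distrib)
    have B2: "(norm (?u - ?v))^2 = (norm (s j - s k))^2" by (simp only: B)
    show ?thesis using A B2 C D by linarith
  qed
  have sd2: "(dist x0 (s k))^2 \<le> (d + 1 / real (Suc M))^2" if "M \<le> k" for k M
  proof -
    have "1 / real (Suc k) \<le> 1 / real (Suc M)" using that by (simp add: frac_le)
    hence "dist x0 (s k) \<le> d + 1 / real (Suc M)" using sd[of k] by linarith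
    thus ?thesis by (simp add: power_mono)
  qed
  have "Cauchy s"
  proof (rule metric_CauchyI)
    fix e :: real assume e: "0 < e"
    have "0 < min 1 (e^2 / (8 * d + 4))" using e d0 by simp
    then obtain M where M: "inverse (real (Suc M)) < min 1 (e^2 / (8 * d + 4))"
      using reals_Archimedean by blast
    define \<delta> where "\<delta> = 1 / real (Suc M)"
    have dpos: "0 < \<delta>" and d1: "\<delta> \<le> 1" and de: "\<delta> * (8 * d + 4) < e^2"
      using M d0 by (auto simp: \<delta>_def field_simps)
    show "\<exists>M. \<forall>m\<ge>M. \<forall>n\<ge>M. dist (s m) (s n) < e"
    proof (intro exI allI impI)
      fix j k assume "M \<le> j" "M \<le> k"
      have "(dist (s j) (s k))^2 \<le> 2 * (d + \<delta>)^2 + 2 * (d + \<delta>)^2 - 4 * d^2"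
        using bound[of j k] sd2[OF \<open>M \<le> j\<close>] sd2[OF \<open>M \<le> k\<close>] unfolding \<delta>_def dist_norm by linarith
      also have "\<dots> = \<delta> * (8 * d + 4 * \<delta>)" by (simp add: power2_eq_square algebra_simps)
      also have "\<dots> \<le> \<delta> * (8 * d + 4)" using dpos d1 by (intro mult_left_mono) auto
      also have "\<dots> < e^2" by (rule de)
      finally have "(dist (s j) (s k))^2 < e^2" .
      thus "dist (s j) (s k) < e" using e by (simp add: power_less_imp_less_base)
    qed
  qed
  then obtain n where lim: "s \<longlonglongrightarrow> n" using Cauchy_convergent_iff convergent_def by blast
  have nN: "n \<in> N" using closed_sequentially[OF clN _ lim] sN by blast
  have "dist x0 n \<le> d"
  proof (rule LIMSEQ_le)
    show "(\<lambda>k. dist x0 (s k)) \<longlonglongrightarrow> dist x0 n" by (rule tendsto_dist[OF tendsto_const lim])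
    show "(\<lambda>k. d + 1 / real (Suc k)) \<longlonglongrightarrow> d"
    proof -
      have "(\<lambda>k. d + inverse (real (Suc k))) \<longlonglongrightarrow> d + 0"
        by (rule tendsto_add[OF tendsto_const LIMSEQ_inverse_real_of_nat])
      thus ?thesis by (simp add: inverse_eq_divide)
    qed
    show "\<exists>N. \<forall>k\<ge>N. dist x0 (s k) \<le> d + 1 / real (Suc k)"
      by (rule exI[of _ 0], intro allI impI, rule less_imp_le[OF sd])
  qed
  hence closest: "norm (x0 - n) \<le> norm (x0 - m)" if "m \<in> N" for m
    using dle[OF that] by (simp add: dist_norm)
  define w where "w = x0 - n"
  have fw: "f w = f x0" using nN unfolding w_def N_def by (simp add: fdiff)
  hence w0: "w \<noteq> 0" using fx0 f0 by auto
  have orth: "cinner m w = 0" if "m \<in> N" for m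
  proof (cases "m = 0")
    case True then show ?thesis by simp
  next
    case False
    let ?c = "cinner m w / cinner m m"
    have "n + ?c *\<^sub>C m \<in> N" using nN that unfolding N_def by (simp add: add sc)
    hence "norm w \<le> norm (w - ?c *\<^sub>C m)"
      using closest unfolding w_def by (metis diff_diff_eq)
    hence le: "(norm w)^2 \<le> (norm (w - ?c *\<^sub>C m))^2" by (simp add: power_mono)
    have h: "cinner m w * cinner w m = complex_of_real ((cmod (cinner m w))^2)"
      by (subst cinner_commute[of w m]) (rule complex_norm_square[symmetric])
    have "complex_of_real ((norm (w - ?c *\<^sub>C m))^2) = cinner (w - ?c *\<^sub>C m) (w - ?c *\<^sub>C m)"
      by (simp only: cinner_self)
    also have "\<dots> = cinner w w - (cinner m w * cinner w m) / cinner m m"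
      by (simp add: key_identity[OF False])
    also have "\<dots> = complex_of_real ((norm w)^2 - (cmod (cinner m w))^2 / (norm m)^2)"
      by (simp only: cinner_self h of_real_diff of_real_divide)
    finally have "(norm (w - ?c *\<^sub>C m))^2 = (norm w)^2 - (cmod (cinner m w))^2 / (norm m)^2"
      using of_real_eq_iff by blast
    with le have "(cmod (cinner m w))^2 / (norm m)^2 \<le> 0" by simp
    moreover have "(norm m)^2 > 0" using False by simp
    ultimately have "(cmod (cinner m w))^2 \<le> 0" by (simp add: divide_le_0_iff)
    thus ?thesis by simp
  qed
  have ww: "cinner w w \<noteq> 0" using w0 cinner_eq_zero by auto
  define z where "z = cnj (f w / cinner w w) *\<^sub>C w"
  show ?thesis
  proof (intro exI allI)
    fix x
    define m where "m = x - (f x / f w) *\<^sub>C w"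
    have "f m = 0" unfolding m_def using fx0 fw by (simp add: fdiff sc)
    hence "cinner m w = 0" using orth unfolding N_def by simp
    hence wm: "cinner w m = 0" by (metis cinner_commute complex_cnj_zero)
    have "x = m + (f x / f w) *\<^sub>C w" unfolding m_def by simp
    hence "cinner w x = (f x / f w) * cinner w w"
      by (metis wm cinner_add_right cinner_scaleC_right add_0)
    hence "cinner z x = (f w / cinner w w) * ((f x / f w) * cinner w w)"
      unfolding z_def by (simp add: cinner_scaleC_left)
    also have "\<dots> = f x" using ww fx0 fw by (simp add: field_simps)
    finally show "f x = cinner z x" by simp
  qed
qed



lemma adj_exists:
  assumes T: "(T::'a::chilbert \<Rightarrow> 'a) \<in> bop"
  shows "\<exists>S\<in>bop. \<forall>x y. cinner (T x) y = cinner x (S y)"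
proof -
  obtain K where K: "\<forall>x. norm (T x) \<le> norm x * K" using T by (auto simp: bop_def)
  define K' where "K' = max K 0"
  have K'0: "0 \<le> K'" unfolding K'_def by simp
  have K': "norm (T x) \<le> norm x * K'" for x
  proof -
    have "norm x * K \<le> norm x * K'" unfolding K'_def by (intro mult_left_mono) auto
    thus ?thesis using K by (meson order_trans)
  qed
  have "\<forall>y. \<exists>z. \<forall>x. cinner y (T x) = cinner z x"
  proof
    fix y
    show "\<exists>z. \<forall>x. cinner y (T x) = cinner z x"
    proof (rule riesz[where K = "norm y * K'"])
      show "cinner y (T (x + x')) = cinner y (T x) + cinner y (T x')" for x x'
        by (simp add: bop_add[OF T] cinner_add_right)
      show "cinner y (T (c *\<^sub>C x)) = c * cinner y (T x)" for c x
        by (simp add: bop_scaleC[OF T] cinner_scaleC_right)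
      show "cmod (cinner y (T x)) \<le> norm x * (norm y * K')" for x
      proof -
        have "cmod (cinner y (T x)) \<le> norm y * norm (T x)" by (rule cauchy_schwarz)
        also have "\<dots> \<le> norm y * (norm x * K')" by (intro mult_left_mono K') auto
        finally show ?thesis by (simp add: algebra_simps)
      qed
    qed
  qed
  then obtain S where S: "\<forall>y. \<forall>x. cinner y (T x) = cinner (S y) x" by metis
  have adjp: "cinner (T x) y = cinner x (S y)" for x y
    by (metis S cinner_commute)
  have Sadd: "S (a + b) = S a + S b" for a b
    by (rule cinner_ext) (simp add: adjp[symmetric] cinner_add_right)
  have Ssc: "S (c *\<^sub>C a) = c *\<^sub>C S a" for c a
    by (rule cinner_ext) (simp add: adjp[symmetric] cinner_scaleC_right)
  have Sbd: "norm (S y) \<le> norm y * K'" for y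
  proof (cases "S y = 0")
    case True then show ?thesis using K'0 by simp
  next
    case False
    have "(norm (S y))^2 = Re (cinner (S y) (S y))" by (simp add: cinner_self)
    also have "\<dots> = Re (cinner (T (S y)) y)" by (simp add: adjp)
    also have "\<dots> \<le> cmod (cinner (T (S y)) y)" by (rule complex_Re_le_cmod)
    also have "\<dots> \<le> norm (T (S y)) * norm y" by (rule cauchy_schwarz)
    also have "\<dots> \<le> (norm (S y) * K') * norm y" by (intro mult_right_mono K') auto
    finally have "norm (S y) * norm (S y) \<le> norm (S y) * (norm y * K')"
      by (simp add: power2_eq_square algebra_simps)
    moreover have "norm (S y) > 0" using False by simp
    ultimately show ?thesis by simp
  qed
  have "S \<in> bop" unfolding bop_def clinear_op_def using Sadd Ssc Sbd by blast
  thus ?thesis using adjp by blast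
qed

lemma adj_char:
  assumes T: "(T::'a::chilbert \<Rightarrow> 'a) \<in> bop"
  shows "adj T \<in> bop \<and> (\<forall>x y. cinner (T x) y = cinner x (adj T y))"
proof -
  obtain S where S: "S \<in> bop" "\<forall>x y. cinner (T x) y = cinner x (S y)" using adj_exists[OF T] by blast
  have "adj T = S" unfolding adj_def
  proof (rule the_equality)
    show "S \<in> bop \<and> (\<forall>x y. cinner (T x) y = cinner x (S y))" using S by blast
    fix S' assume "S' \<in> bop \<and> (\<forall>x y. cinner (T x) y = cinner x (S' y))"
    hence "\<forall>x y. cinner x (S' y) = cinner x (S y)" using S by simp
    thus "S' = S" by (intro ext cinner_ext) blast
  qed
  thus ?thesis using S by simp
qed

lemma adj_eqI:
  assumes T: "(T::'a::chilbert \<Rightarrow> 'a) \<in> bop" and "S \<in> bop" and "\<And>x y. cinner (T x) y = cinner x (S y)"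
  shows "adj T = S"
proof -
  have "\<forall>x y. cinner x (adj T y) = cinner x (S y)" using adj_char[OF T] assms(3) by metis
  thus ?thesis by (intro ext cinner_ext) blast
qed

lemma proj_sa:
  assumes "is_projection Q" shows "cinner (Q x) y = cinner x (Q (y::'a::chilbert))"
  using adj_char[of Q] assms unfolding is_projection_def by metis

lemma onorm_diff_le:
  assumes "bounded_linear f" "bounded_linear g"
  shows "onorm (\<lambda>x. f x - g x) \<le> onorm f + onorm g"
  using onorm_triangle[OF assms(1) bounded_linear_minus[OF assms(2)]] onorm_neg[of g]
  by simp



theorem proposition3p10:
  fixes M :: "('h::chilbert \<Rightarrow> 'h) set" and T E :: "'h \<Rightarrow> 'h"
  assumes "von_neumann_algebra M"
    and "T \<in> M"
    and "E \<in> M" and "is_projection E"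
    and "invertible_in_corner M E (\<lambda>x. E (T (E x)) - E x)"
  shows "\<forall>A \<in> corner (\<lambda>x. x - E x) M E.
           \<exists>P \<in> M. is_idempotent P
             \<and> kerproj P = (\<lambda>x. x - E x)
             \<and> onorm P \<le> 1 + onorm (T \<circ> E) + onorm A * (onorm (T \<circ> E) + 1)
             \<and> range (\<lambda>x. T (E x) - P (E x)) = {\<xi> + A \<xi> | \<xi>. \<xi> \<in> range E}"
proof
  fix A assume A: "A \<in> corner (\<lambda>x. x - E x) M E"
  note vn = assms(1)[unfolded von_neumann_algebra_def]
  have Mb: "\<And>X. X \<in> M \<Longrightarrow> X \<in> bop" using vn by blast
  have Madd: "\<And>X Y. X \<in> M \<Longrightarrow> Y \<in> M \<Longrightarrow> (\<lambda>x. X x + Y x) \<in> M" using vn by blast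
  have Mcomp: "\<And>X Y. X \<in> M \<Longrightarrow> Y \<in> M \<Longrightarrow> X \<circ> Y \<in> M" using vn by blast
  have Msc: "\<And>X c. X \<in> M \<Longrightarrow> (\<lambda>x. c *\<^sub>C X x) \<in> M" using vn by blast
  have Mid: "id \<in> M" using vn by blast
  have Mdiff: "(\<lambda>x. X x - Y x) \<in> M" if "X \<in> M" "Y \<in> M" for X Y
  proof -
    have "(\<lambda>x. X x + (\<lambda>x. (-1) *\<^sub>C Y x) x) \<in> M" using that by (intro Madd Msc)
    thus ?thesis by (simp add: scaleC_minus1)
  qed
  have Eb: "E \<in> bop" using assms(3) Mb by blast
  have Tb: "T \<in> bop" using assms(2) Mb by blast
  have EE: "E (E x) = E x" for x using assms(4) unfolding is_projection_def by (metis comp_apply)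
  have Esa: "cinner (E x) y = cinner x (E y)" for x y by (rule proj_sa[OF assms(4)])
  define F where "F = (\<lambda>x. x - E x)"
  have FM: "F \<in> M" unfolding F_def using Mdiff[OF Mid assms(3)] by simp
  have Fb: "F \<in> bop" using FM Mb by blast
  have EF: "E (F x) = 0" for x unfolding F_def by (simp add: bop_diff[OF Eb] EE)
  obtain X where X: "X \<in> M" and Adef: "A = F \<circ> X \<circ> E" using A unfolding corner_def F_def by blast
  have AM: "A \<in> M" unfolding Adef by (intro Mcomp FM X assms(3))
  have Ab: "A \<in> bop" using AM Mb by blast
  have EA: "E (A x) = 0" for x unfolding Adef by (simp add: EF)
  define S where "S = (\<lambda>x. E (T (E x)) - E x)"
  obtain B where B: "B \<in> corner E M E" and SB: "S \<circ> B = E"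
    using assms(5) unfolding invertible_in_corner_def S_def by blast
  obtain Z where Bdef: "B = E \<circ> Z \<circ> E" using B unfolding corner_def by blast
  have EB: "E (B y) = B y" for y unfolding Bdef by (simp add: EE)
  have SBy: "S (B y) = E y" for y using SB by (metis comp_apply)
  have SM: "S \<in> M" unfolding S_def
    using Mdiff[OF Mcomp[OF assms(3) Mcomp[OF assms(2) assms(3)]] assms(3)] by (simp add: comp_def)
  have Sb: "S \<in> bop" using SM Mb by blast
  have ES: "E (S x) = S x" for x unfolding S_def by (simp add: bop_diff[OF Eb] EE)
  have SE: "S (E x) = S x" for x unfolding S_def by (simp add: EE)
  define P where "P = (\<lambda>x. T (E x) - (E (S x) + A (S x)))"
  have PM: "P \<in> M"
  proof -
    have "(\<lambda>x. (T \<circ> E) x - (\<lambda>x. (E \<circ> S) x + (A \<circ> S) x) x) \<in> M"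
      by (intro Mdiff Madd Mcomp assms(2,3) SM AM)
    thus ?thesis unfolding P_def by (simp add: comp_def)
  qed
  have Pb: "P \<in> bop" using PM Mb by blast
  have EP: "E (P x) = E x" for x
    unfolding P_def by (simp add: bop_diff[OF Eb] bop_add[OF Eb] EA ES S_def EE)
  have PE: "P (E x) = P x" for x unfolding P_def by (simp add: EE SE)
  have PP: "P (P x) = P x" for x by (metis PE EP)
  have ker: "P x = 0 \<longleftrightarrow> E x = 0" for x
    by (metis EP PE bop_zero[OF Eb] bop_zero[OF Pb])
  have idem: "is_idempotent P" unfolding is_idempotent_def using Pb PP by auto
  have FF: "F (F x) = F x" for x unfolding F_def by (simp add: bop_diff[OF Eb] EE)
  have Fsa: "cinner (F x) y = cinner x (F y)" for x y
    unfolding F_def by (simp add: cinner_diff_left cinner_diff_right Esa)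
  have Fproj: "is_projection F"
    unfolding is_projection_def using Fb FF adj_eqI[OF Fb Fb Fsa] by (auto simp: comp_def)
  have rF: "range F = {x. P x = 0}"
  proof
    show "range F \<subseteq> {x. P x = 0}" using ker EF by auto
    show "{x. P x = 0} \<subseteq> range F"
    proof
      fix x assume "x \<in> {x. P x = 0}"
      hence "E x = 0" using ker by simp
      hence "x = F x" unfolding F_def by simp
      thus "x \<in> range F" by (metis rangeI)
    qed
  qed
  have kp: "kerproj P = F" unfolding kerproj_def
  proof (rule the_equality)
    show "is_projection F \<and> range F = {x. P x = 0}" using Fproj rF by simp
    fix Q assume Q: "is_projection Q \<and> range Q = {x. P x = 0}"
    have QQ: "Q (Q x) = Q x" for x using Q unfolding is_projection_def by (metis comp_apply)
    have FQ: "F (Q x) = Q x" for x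
    proof -
      have "P (Q x) = 0" using Q by blast
      hence "E (Q x) = 0" using ker by simp
      thus ?thesis unfolding F_def by simp
    qed
    have QF: "Q (F x) = F x" for x
    proof -
      have "F x \<in> range Q" using Q rF by blast
      then obtain z where "F x = Q z" by blast
      thus ?thesis using QQ by simp
    qed
    show "Q = F"
    proof (intro ext cinner_ext)
      fix x y
      have "cinner y (Q x) = cinner y (F (Q x))" by (simp add: FQ)
      also have "\<dots> = cinner (F y) (Q x)" by (simp add: Fsa)
      also have "\<dots> = cinner (Q (F y)) x" by (simp add: proj_sa[OF conjunct1[OF Q]])
      also have "\<dots> = cinner y (F x)" by (simp add: QF Fsa)
      finally show "cinner y (Q x) = cinner y (F x)" .
    qed
  qed
  have normEF: "(norm (E x))^2 \<le> (norm x)^2 \<and> (norm (F x))^2 \<le> (norm x)^2" for x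
  proof -
    have "x = E x + F x" unfolding F_def by simp
    hence "(norm x)^2 = (norm (E x))^2 + (norm (F x))^2 + 2 * Re (cinner (E x) (F x))"
      by (metis norm_add_sq)
    moreover have "cinner (E x) (F x) = 0" by (simp add: Esa EF)
    ultimately show ?thesis by simp
  qed
  have nE: "norm (E x) \<le> 1 * norm x" for x using power2_le_imp_le[OF conjunct1[OF normEF[of x]]] by simp
  have nF: "norm (F x) \<le> 1 * norm x" for x using power2_le_imp_le[OF conjunct2[OF normEF[of x]]] by simp
  have oE: "onorm E \<le> 1" by (rule onorm_bound, simp, rule nE)
  have oF: "onorm F \<le> 1" by (rule onorm_bound, simp, rule nF)
  have blE: "bounded_linear E" by (rule bop_bounded_linear[OF Eb])
  have blF: "bounded_linear F" by (rule bop_bounded_linear[OF Fb])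
  have blA: "bounded_linear A" by (rule bop_bounded_linear[OF Ab])
  have blS: "bounded_linear S" by (rule bop_bounded_linear[OF Sb])
  have blTE: "bounded_linear (T \<circ> E)" by (rule bop_bounded_linear) (intro Mb Mcomp assms(2,3))
  define t where "t = onorm (T \<circ> E)"
  define a where "a = onorm A"
  have t0: "0 \<le> t" unfolding t_def by (rule onorm_pos_le[OF blTE])
  have a0: "0 \<le> a" unfolding a_def by (rule onorm_pos_le[OF blA])
  have Peq: "P = (\<lambda>x. (\<lambda>x. E x + (F \<circ> (T \<circ> E)) x) x - (A \<circ> S) x)"
  proof
    fix x
    have "E (S x) = E (T (E x)) - E x" unfolding S_def by (simp add: bop_diff[OF Eb] EE)
    thus "P x = (\<lambda>x. E x + (F \<circ> (T \<circ> E)) x) x - (A \<circ> S) x"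
      unfolding P_def F_def by (simp add: algebra_simps)
  qed
  have blFTE: "bounded_linear (F \<circ> (T \<circ> E))" by (rule bounded_linear_compose[OF blF blTE, unfolded comp_def[symmetric]])
  have blETE: "bounded_linear (E \<circ> (T \<circ> E))" by (rule bounded_linear_compose[OF blE blTE, unfolded comp_def[symmetric]])
  have blAS: "bounded_linear (A \<circ> S)" by (rule bounded_linear_compose[OF blA blS, unfolded comp_def[symmetric]])
  have bl1: "bounded_linear (\<lambda>x. E x + (F \<circ> (T \<circ> E)) x)" by (rule bounded_linear_add[OF blE blFTE])
  have "onorm P \<le> onorm (\<lambda>x. E x + (F \<circ> (T \<circ> E)) x) + onorm (A \<circ> S)"
    unfolding Peq by (rule onorm_diff_le[OF bl1 blAS])
  moreover have "onorm (\<lambda>x. E x + (F \<circ> (T \<circ> E)) x) \<le> 1 + t"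
  proof -
    have "onorm (\<lambda>x. E x + (F \<circ> (T \<circ> E)) x) \<le> onorm E + onorm (F \<circ> (T \<circ> E))"
      by (rule onorm_triangle[OF blE blFTE])
    moreover have "onorm (F \<circ> (T \<circ> E)) \<le> onorm F * t" unfolding t_def by (rule onorm_compose[OF blF blTE])
    moreover have "onorm F * t \<le> 1 * t" using oF t0 by (intro mult_right_mono) auto
    ultimately show ?thesis using oE by linarith
  qed
  moreover have "onorm (A \<circ> S) \<le> a * (t + 1)"
  proof -
    have "S = (\<lambda>x. (E \<circ> (T \<circ> E)) x - E x)" unfolding S_def by auto
    hence "onorm S \<le> onorm (E \<circ> (T \<circ> E)) + onorm E" using onorm_diff_le[OF blETE blE] by simp
    moreover have "onorm (E \<circ> (T \<circ> E)) \<le> onorm E * t" unfolding t_def by (rule onorm_compose[OF blE blTE])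
    moreover have "onorm E * t \<le> 1 * t" using oE t0 by (intro mult_right_mono) auto
    ultimately have oS: "onorm S \<le> t + 1" using oE by linarith
    have "onorm (A \<circ> S) \<le> a * onorm S" unfolding a_def by (rule onorm_compose[OF blA blS])
    also have "\<dots> \<le> a * (t + 1)" using oS a0 by (intro mult_left_mono) auto
    finally show ?thesis .
  qed
  ultimately have normP: "onorm P \<le> 1 + onorm (T \<circ> E) + onorm A * (onorm (T \<circ> E) + 1)"
    unfolding t_def a_def by linarith
  have TP: "T (E x) - P (E x) = S x + A (S x)" for x
    unfolding P_def by (simp add: EE SE ES)
  have rng: "range (\<lambda>x. T (E x) - P (E x)) = {\<xi> + A \<xi> | \<xi>. \<xi> \<in> range E}"
  proof
    show "range (\<lambda>x. T (E x) - P (E x)) \<subseteq> {\<xi> + A \<xi> | \<xi>. \<xi> \<in> range E}"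
    proof
      fix v assume "v \<in> range (\<lambda>x. T (E x) - P (E x))"
      then obtain x where v: "v = T (E x) - P (E x)" by blast
      have "S x \<in> range E" by (metis ES rangeI)
      thus "v \<in> {\<xi> + A \<xi> | \<xi>. \<xi> \<in> range E}" unfolding v TP by blast
    qed
    show "{\<xi> + A \<xi> | \<xi>. \<xi> \<in> range E} \<subseteq> range (\<lambda>x. T (E x) - P (E x))"
    proof
      fix v assume "v \<in> {\<xi> + A \<xi> | \<xi>. \<xi> \<in> range E}"
      then obtain y where v: "v = E y + A (E y)" by blast
      have "T (E (B y)) - P (E (B y)) = S (B y) + A (S (B y))" by (rule TP)
      hence "T (E (B y)) - P (E (B y)) = v" unfolding SBy v .
      thus "v \<in> range (\<lambda>x. T (E x) - P (E x))" by (rule range_eqI[OF sym])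
    qed
  qed
  show "\<exists>P \<in> M. is_idempotent P
             \<and> kerproj P = (\<lambda>x. x - E x)
             \<and> onorm P \<le> 1 + onorm (T \<circ> E) + onorm A * (onorm (T \<circ> E) + 1)
             \<and> range (\<lambda>x. T (E x) - P (E x)) = {\<xi> + A \<xi> | \<xi>. \<xi> \<in> range E}"
    using PM idem kp normP rng unfolding F_def by blast
qed

end
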